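(* Let $\nu$ be a fixed order, $a<b$, $f,g\in C^\infty[a,b]$ with $g(x)\ne0$ and $g'(x)\neq0$ on $[a,b]$, and $\mathcal{H}_\nu[f]=\int_a^bf(x)J_\nu(\omega g(x))\,dx$. Let $\varphi_k(x)=g'(x)g(x)^k$. Let $a=x_0<x_1<\dots<x_d=b$ be distinct nodes with positive integer multiplicities $m_0,\dots,m_d$, $n=\sum_{k=0}^dm_k$, and let $p=\sum_{k=0}^{n-1}c_k\varphi_k$ be the unique function in the span of $\varphi_0,\dots,\varphi_{n-1}$ with $p^{(j-1)}(x_k)=f^{(j-1)}(x_k)$ for $j=1,\dots,m_k$, $k=0,\dots,d$. Define $Q^F[f]=\mathcal{H}_\nu[p]$. If $m_0\ge m$ and $m_d\ge m$ for an integer $m\ge1$, then $\mathcal{H}_\nu[f]-Q^F[f]=\mathcal{O}(\omega^{-m-3/2})$ as $\omega\to\infty$.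
   Context: $J_\nu$ is the Bessel function of the first kind of order $\nu$. Existence and uniqueness of the interpolant $p$ holds since the span of $\varphi_0,\dots,\varphi_{n-1}$ is an extended Chebyshev space. *)

theory Defs
  imports "HOL-Analysis.Analysis" "HOL-Library.Landau_Symbols"
begin

text \<open>Bessel function of the first kind of (real) order nu, principal branch:
  J_nu(z) = (z/2)^nu * sum_k (-1)^k (z/2)^(2k) / (k! Gamma(k+nu+1)),
  written with the reciprocal Gamma function rGamma (so that it is also
  correct for negative integer orders).\<close>
definition bessel_J :: "real \<Rightarrow> complex \<Rightarrow> complex" where
  "bessel_J nu z =
     (z / 2) powr (complex_of_real nu) *
     (\<Sum>k. (-1) ^ k * rGamma (of_nat k + complex_of_real nu + 1) / fact k * (z / 2) ^ (2 * k))"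

text \<open>D is a family of successive derivatives on S: D (Suc k) is the derivative
  of D k at every point of S (one-sided at endpoints, i.e. within S).
  "D 0 = f on [a,b] and smooth_derivs D {a..b}" expresses f in C^infinity[a,b].\<close>
definition smooth_derivs :: "(nat \<Rightarrow> real \<Rightarrow> real) \<Rightarrow> real set \<Rightarrow> bool" where
  "smooth_derivs D S \<longleftrightarrow>
     (\<forall>k. \<forall>x\<in>S. (D k has_real_derivative D (Suc k) x) (at x within S))"

definition bessel_H :: "real \<Rightarrow> real \<Rightarrow> real \<Rightarrow> (real \<Rightarrow> real) \<Rightarrow> (real \<Rightarrow> real) \<Rightarrow> real \<Rightarrow> complex" where
  "bessel_H nu a b g f \<omega> =
     integral {a..b} (\<lambda>x. complex_of_real (f x) * bessel_J nu (complex_of_real (\<omega> * g x)))"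

end

theory Submission
  imports Defs
begin


definition bcoef :: "real \<Rightarrow> nat \<Rightarrow> real" where
  "bcoef mu k = (-1) ^ k * rGamma (real k + mu + 1) / fact k"

definition BF :: "real \<Rightarrow> real \<Rightarrow> real" where
  "BF mu u = (\<Sum>k. bcoef mu k * u ^ k)"

definition BK :: "real \<Rightarrow> real \<Rightarrow> real" where
  "BK mu t = (t / 2) powr mu * BF mu (t\<^sup>2 / 4)"

lemma rGamma_step: "z \<noteq> 0 \<Longrightarrow> rGamma (z + 1) = rGamma z / (z::real)"
  using rGamma_plus1[of z] by (simp add: field_simps)

lemma bcoef_summable: "summable (\<lambda>k. bcoef mu k * u ^ k)"
proof (rule summable_ratio_test[where c = "1/2" and N = "nat \<lceil>2 * \<bar>u\<bar> + \<bar>mu\<bar>\<rceil> + 1"])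
  fix n assume n: "nat \<lceil>2 * \<bar>u\<bar> + \<bar>mu\<bar>\<rceil> + 1 \<le> n"
  then have n1: "real n \<ge> 2 * \<bar>u\<bar> + \<bar>mu\<bar> + 1" by linarith
  have z: "real n + mu + 1 \<noteq> 0" using n1 by linarith
  have zpos: "real n + mu + 1 \<ge> 2 * \<bar>u\<bar> + 1" using n1 by linarith
  have rg: "rGamma (real (Suc n) + mu + 1) = rGamma (real n + mu + 1) / (real n + mu + 1)"
    using rGamma_step[OF z] by (simp add: add_ac)
  have A: "bcoef mu (Suc n) * u ^ Suc n = (bcoef mu n * u ^ n) * (- u / ((real n + 1) * (real n + mu + 1)))"
    unfolding bcoef_def rg using z by (simp add: field_simps)
  have dpos: "(real n + 1) * (real n + mu + 1) \<ge> 1 * (2 * \<bar>u\<bar> + 1)"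
    by (intro mult_mono) (use zpos in auto)
  have B: "\<bar>- u / ((real n + 1) * (real n + mu + 1))\<bar> \<le> 1/2"
    using dpos zpos by (simp add: abs_divide field_simps)
  have "norm (bcoef mu (Suc n) * u ^ Suc n) = norm (bcoef mu n * u ^ n) * \<bar>- u / ((real n + 1) * (real n + mu + 1))\<bar>"
    unfolding A by (simp add: abs_mult)
  also have "\<dots> \<le> norm (bcoef mu n * u ^ n) * (1/2)"
    by (intro mult_left_mono B) auto
  also have "\<dots> = 1/2 * norm (bcoef mu n * u ^ n)" by simp
  finally show "norm (bcoef mu (Suc n) * u ^ Suc n) \<le> 1/2 * norm (bcoef mu n * u ^ n)" .
qed simp

lemma diffs_bcoef: "diffs (bcoef mu) = (\<lambda>k. - bcoef (mu + 1) k)"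
proof
  fix k
  have e: "real (Suc k) + mu + 1 = real k + (mu + 1) + 1" by simp
  have "diffs (bcoef mu) k = real (Suc k) * ((-1) ^ Suc k * rGamma (real k + (mu + 1) + 1) / fact (Suc k))"
    unfolding diffs_def bcoef_def e by simp
  also have "\<dots> = - bcoef (mu + 1) k"
    unfolding bcoef_def by (simp add: field_simps del: of_nat_Suc)
  finally show "diffs (bcoef mu) k = - bcoef (mu + 1) k" .
qed

lemma BF_deriv: "(BF mu has_real_derivative - BF (mu + 1) u) (at u)"
proof -
  have "(BF mu has_real_derivative (\<Sum>n. diffs (bcoef mu) n * u^n)) (at u)"
    unfolding BF_def[abs_def] by (rule termdiffs_strong_converges_everywhere) (rule bcoef_summable)
  also have "(\<Sum>n. diffs (bcoef mu) n * u^n) = - BF (mu + 1) u"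
    unfolding diffs_bcoef BF_def using bcoef_summable suminf_minus by (simp add: suminf_minus[symmetric])
  finally show ?thesis .
qed

lemma bcoef_step: "bcoef mu k = (real k + mu + 1) * bcoef (mu + 1) k"
proof -
  have "(real k + mu + 1) * rGamma (real k + mu + 1 + 1) = rGamma (real k + mu + 1)"
    by (rule rGamma_plus1)
  moreover have "real k + mu + 1 + 1 = real k + (mu + 1) + 1" by simp
  ultimately show ?thesis unfolding bcoef_def by (simp add: field_simps)
qed

lemma BF_rec: "BF mu u = (mu + 1) * BF (mu + 1) u - u * BF (mu + 2) u"
proof -
  define c where "c = bcoef (mu + 1)"
  have sc: "summable (\<lambda>k. c k * u ^ k)" unfolding c_def by (rule bcoef_summable)
  have s1: "(\<lambda>k. (mu + 1) * (c k * u ^ k)) sums ((mu + 1) * BF (mu + 1) u)"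
    unfolding BF_def c_def by (intro sums_mult summable_sums bcoef_summable)
  have dc: "diffs c = (\<lambda>k. - bcoef (mu + 2) k)"
    unfolding c_def diffs_bcoef by (simp add: add.assoc)
  have "(\<lambda>j. u * (diffs c j * u ^ j)) sums (u * (- BF (mu + 2) u))"
    unfolding dc BF_def using bcoef_summable[of "mu + 2" u]
    by (intro sums_mult) (simp add: summable_sums sums_minus[of "\<lambda>k. bcoef (mu + 2) k * u ^ k", simplified])
  moreover have "(\<lambda>j. u * (diffs c j * u ^ j)) = (\<lambda>j. real (Suc j) * (c (Suc j) * u ^ Suc j))"
    by (auto simp: diffs_def)
  ultimately have "(\<lambda>j. real (Suc j) * (c (Suc j) * u ^ Suc j)) sums (u * (- BF (mu + 2) u))" by simp
  then have s2: "(\<lambda>k. real k * (c k * u ^ k)) sums (u * (- BF (mu + 2) u))"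
    using sums_Suc_iff[of "\<lambda>k. real k * (c k * u ^ k)"] by simp
  have "(\<lambda>k. (mu + 1) * (c k * u ^ k) + real k * (c k * u ^ k)) sums
          ((mu + 1) * BF (mu + 1) u + u * (- BF (mu + 2) u))"
    by (rule sums_add[OF s1 s2])
  moreover have "(\<lambda>k. (mu + 1) * (c k * u ^ k) + real k * (c k * u ^ k)) = (\<lambda>k. bcoef mu k * u ^ k)"
    by (auto simp: bcoef_step[of mu] c_def algebra_simps)
  ultimately have "(\<lambda>k. bcoef mu k * u ^ k) sums ((mu + 1) * BF (mu + 1) u + u * (- BF (mu + 2) u))"
    by simp
  then show ?thesis unfolding BF_def[of mu] by (simp add: sums_iff)
qed



lemma BK_deriv:
  assumes t: "t > 0"
  shows "(BK mu has_real_derivative (mu / t * BK mu t - BK (mu + 1) t)) (at t)"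
proof -
  have d1: "((\<lambda>t. (t / 2) powr mu) has_real_derivative mu * (t / 2) powr (mu - 1) * (1/2)) (at t)"
    using t by (auto intro!: derivative_eq_intros)
  have d2: "((\<lambda>t. BF mu (t\<^sup>2 / 4)) has_real_derivative (- BF (mu + 1) (t\<^sup>2 / 4)) * (2 * t / 4)) (at t)"
    by (rule DERIV_chain2[OF BF_deriv]) (auto intro!: derivative_eq_intros)
  have "(BK mu has_real_derivative (mu * (t / 2) powr (mu - 1) * (1/2)) * BF mu (t\<^sup>2 / 4)
          + ((- BF (mu + 1) (t\<^sup>2 / 4)) * (2 * t / 4)) * (t / 2) powr mu) (at t)"
    unfolding BK_def[abs_def] by (rule DERIV_mult[OF d1 d2])
  moreover have "(mu * (t / 2) powr (mu - 1) * (1/2)) * BF mu (t\<^sup>2 / 4)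
          + ((- BF (mu + 1) (t\<^sup>2 / 4)) * (2 * t / 4)) * (t / 2) powr mu = mu / t * BK mu t - BK (mu + 1) t"
  proof -
    have p1: "(t / 2) powr (mu - 1) = (t / 2) powr mu / (t / 2)"
      using t by (simp add: powr_diff)
    have p2: "(t / 2) powr (mu + 1) = (t / 2) powr mu * (t / 2)"
      using t by (simp add: powr_add)
    show ?thesis unfolding BK_def p1 p2 using t by (simp add: field_simps)
  qed
  ultimately show ?thesis by simp
qed

lemma BK_rec:
  assumes t: "t > 0"
  shows "BK mu t + BK (mu + 2) t = 2 * (mu + 1) / t * BK (mu + 1) t"
proof -
  have p1: "(t / 2) powr (mu + 1) = (t / 2) powr mu * (t / 2)"
    using t by (simp add: powr_add)
  have p2: "(t / 2) powr (mu + 2) = (t / 2) powr mu * (t / 2)\<^sup>2"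
    using t by (simp add: powr_add power2_eq_square)
  define P where "P = (t / 2) powr mu"
  define u where "u = t\<^sup>2 / 4"
  have u: "u = (t / 2)\<^sup>2" unfolding u_def by (simp add: power2_eq_square)
  have H: "BF mu u = (mu + 1) * BF (mu + 1) u - u * BF (mu + 2) u"
    by (rule BF_rec)
  have "P * BF mu u + P * u * BF (mu + 2) u = P * ((mu + 1) * BF (mu + 1) u)"
  proof -
    from H have "P * BF mu u = P * ((mu + 1) * BF (mu + 1) u - u * BF (mu + 2) u)" by simp
    then show ?thesis by (simp add: algebra_simps)
  qed
  then have "P * BF mu u + P * (t / 2)\<^sup>2 * BF (mu + 2) u = P * ((mu + 1) * BF (mu + 1) u)"
    by (simp add: u)
  also have "\<dots> = 2 * (mu + 1) / t * (P * (t / 2) * BF (mu + 1) u)"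
    using t by (simp add: field_simps)
  finally show ?thesis unfolding BK_def p1 p2 P_def[symmetric] u_def[symmetric]
    by (simp add: algebra_simps)
qed

lemma BK_deriv2:
  assumes t: "t > 0"
  shows "(BK (mu + 1) has_real_derivative (BK mu t - (mu + 1) / t * BK (mu + 1) t)) (at t)"
proof -
  have "(BK (mu + 1) has_real_derivative ((mu + 1) / t * BK (mu + 1) t - BK (mu + 1 + 1) t)) (at t)"
    by (rule BK_deriv[OF t])
  moreover have "(mu + 1) / t * BK (mu + 1) t - BK (mu + 1 + 1) t = BK mu t - (mu + 1) / t * BK (mu + 1) t"
  proof -
    have "BK (mu + 1 + 1) t = 2 * (mu + 1) / t * BK (mu + 1) t - BK mu t"
      using BK_rec[OF t, of mu] by (simp add: add.assoc)
    then show ?thesis by (simp add: field_simps)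
  qed
  ultimately show ?thesis by metis
qed



lemma BK_bound: "\<exists>C T. T > 0 \<and> (\<forall>t\<ge>T. \<bar>BK mu t\<bar> \<le> C / sqrt t)"
proof -
  define a where "a = mu + 1/2"
  define P where "P = BK mu"
  define Q where "Q = BK (mu + 1)"
  define Gf where "Gf = (\<lambda>t. t * ((P t)\<^sup>2 + (Q t)\<^sup>2) - 2 * a * (P t * Q t))"
  define H where "H = (\<lambda>t. Gf t * exp (2 * \<bar>a\<bar> / t))"
  define T0 where "T0 = max 1 (2 * \<bar>a\<bar>)"
  have T0: "T0 > 0" "T0 \<ge> 2 * \<bar>a\<bar>" unfolding T0_def by auto
  have dP: "(P has_real_derivative (mu / t * P t - Q t)) (at t)" if "t > 0" for t
    unfolding P_def Q_def by (rule BK_deriv[OF that])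
  have dQ: "(Q has_real_derivative (P t - (mu + 1) / t * Q t)) (at t)" if "t > 0" for t
    unfolding P_def Q_def by (rule BK_deriv2[OF that])
  have dG: "(Gf has_real_derivative (2 * a / t * (P t * Q t))) (at t)" if t: "t > 0" for t
  proof -
    have "(Gf has_real_derivative
        1 * ((P t)\<^sup>2 + (Q t)\<^sup>2) + t * (2 * P t * (mu / t * P t - Q t) + 2 * Q t * (P t - (mu + 1) / t * Q t))
        - 2 * a * ((mu / t * P t - Q t) * Q t + P t * (P t - (mu + 1) / t * Q t))) (at t)"
      unfolding Gf_def
      by (rule derivative_eq_intros dP[OF t] dQ[OF t] refl)+ (auto simp: algebra_simps)
    moreover have "1 * ((P t)\<^sup>2 + (Q t)\<^sup>2) + t * (2 * P t * (mu / t * P t - Q t) + 2 * Q t * (P t - (mu + 1) / t * Q t))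
        - 2 * a * ((mu / t * P t - Q t) * Q t + P t * (P t - (mu + 1) / t * Q t)) = 2 * a / t * (P t * Q t)"
      using t unfolding a_def by (simp add: field_simps power2_eq_square)
    ultimately show ?thesis by simp
  qed
  have PQ: "2 * \<bar>P t * Q t\<bar> \<le> (P t)\<^sup>2 + (Q t)\<^sup>2" for t
  proof -
    have "0 \<le> (\<bar>P t\<bar> - \<bar>Q t\<bar>)\<^sup>2" by simp
    then show ?thesis by (simp add: power2_eq_square algebra_simps abs_mult)
  qed
  have Gge: "Gf t \<ge> t * ((P t)\<^sup>2 + (Q t)\<^sup>2) / 2" if t: "t \<ge> T0" for t
  proof -
    have "2 * a * (P t * Q t) \<le> \<bar>a\<bar> * (2 * \<bar>P t * Q t\<bar>)"
      using abs_ge_self[of "2 * a * (P t * Q t)"] by (simp add: abs_mult)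
    also have "\<dots> \<le> \<bar>a\<bar> * ((P t)\<^sup>2 + (Q t)\<^sup>2)" by (intro mult_left_mono PQ) auto
    also have "\<dots> \<le> (t / 2) * ((P t)\<^sup>2 + (Q t)\<^sup>2)"
      by (intro mult_right_mono) (use t T0 in auto)
    finally show ?thesis unfolding Gf_def by simp
  qed
  have Hdec: "H t \<le> H T0" if t: "t \<ge> T0" for t
  proof (rule DERIV_nonpos_imp_nonincreasing[OF t])
    fix s assume s: "T0 \<le> s" "s \<le> t"
    then have s0: "s > 0" using T0 by auto
    have dE: "((\<lambda>s. exp (2 * \<bar>a\<bar> / s)) has_real_derivative exp (2 * \<bar>a\<bar> / s) * (- (2 * \<bar>a\<bar>) / s\<^sup>2)) (at s)"
      using s0 by (auto intro!: derivative_eq_intros simp: power2_eq_square field_simps)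
    have "(H has_real_derivative (2 * a / s * (P s * Q s)) * exp (2 * \<bar>a\<bar> / s)
          + (exp (2 * \<bar>a\<bar> / s) * (- (2 * \<bar>a\<bar>) / s\<^sup>2)) * Gf s) (at s)"
      unfolding H_def by (rule DERIV_mult[OF dG[OF s0] dE])
    then have "(H has_real_derivative (2 * a / s * (P s * Q s)) * exp (2 * \<bar>a\<bar> / s)
          + Gf s * (exp (2 * \<bar>a\<bar> / s) * (- (2 * \<bar>a\<bar>) / s\<^sup>2))) (at s)"
      by (simp add: mult.commute)
    moreover have "(2 * a / s * (P s * Q s)) * exp (2 * \<bar>a\<bar> / s)
          + Gf s * (exp (2 * \<bar>a\<bar> / s) * (- (2 * \<bar>a\<bar>) / s\<^sup>2)) \<le> 0"
    proof -
      have "2 * a / s * (P s * Q s) \<le> \<bar>a\<bar> * ((P s)\<^sup>2 + (Q s)\<^sup>2) / s"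
      proof -
        have "2 * a * (P s * Q s) \<le> \<bar>a\<bar> * (2 * \<bar>P s * Q s\<bar>)"
          using abs_ge_self[of "2 * a * (P s * Q s)"] by (simp add: abs_mult)
        also have "\<dots> \<le> \<bar>a\<bar> * ((P s)\<^sup>2 + (Q s)\<^sup>2)" by (intro mult_left_mono PQ) auto
        finally show ?thesis using s0 by (simp add: divide_right_mono)
      qed
      also have "\<dots> \<le> Gf s * (2 * \<bar>a\<bar> / s\<^sup>2)"
      proof -
        have "\<bar>a\<bar> * ((P s)\<^sup>2 + (Q s)\<^sup>2) / s = (s * ((P s)\<^sup>2 + (Q s)\<^sup>2) / 2) * (2 * \<bar>a\<bar> / s\<^sup>2)"
          using s0 by (simp add: field_simps power2_eq_square)
        also have "\<dots> \<le> Gf s * (2 * \<bar>a\<bar> / s\<^sup>2)"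
          by (intro mult_right_mono Gge s) auto
        finally show ?thesis .
      qed
      finally have "2 * a / s * (P s * Q s) - Gf s * (2 * \<bar>a\<bar> / s\<^sup>2) \<le> 0" by simp
      then have "(2 * a / s * (P s * Q s) - Gf s * (2 * \<bar>a\<bar> / s\<^sup>2)) * exp (2 * \<bar>a\<bar> / s) \<le> 0"
        by (simp add: mult_nonpos_nonneg)
      then show ?thesis by (simp add: algebra_simps)
    qed
    ultimately show "\<exists>y. (H has_real_derivative y) (at s) \<and> y \<le> 0" by blast
  qed
  define C where "C = sqrt (2 * H T0)"
  have "\<bar>BK mu t\<bar> \<le> C / sqrt t" if t: "t \<ge> T0" for t
  proof -
    have t0: "t > 0" using t T0 by auto
    have "(P t)\<^sup>2 \<le> (P t)\<^sup>2 + (Q t)\<^sup>2" by simp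
    also have "\<dots> \<le> 2 * Gf t / t" using Gge[OF t] t0 by (simp add: field_simps)
    also have "\<dots> \<le> 2 * H t / t"
    proof -
      have "t * ((P t)\<^sup>2 + (Q t)\<^sup>2) / 2 \<ge> 0" using t0 by simp
      then have "Gf t \<ge> 0" using Gge[OF t] by linarith
      then have "Gf t \<le> H t" unfolding H_def
        using mult_left_mono[of 1 "exp (2 * \<bar>a\<bar> / t)" "Gf t"] t0 by (simp add: one_le_exp_iff)
      then show ?thesis using t0 by (simp add: divide_right_mono)
    qed
    also have "\<dots> \<le> 2 * H T0 / t" using Hdec[OF t] t0 by (simp add: divide_right_mono)
    finally have sq: "(P t)\<^sup>2 \<le> 2 * H T0 / t" .
    have "\<bar>P t\<bar> = sqrt ((P t)\<^sup>2)" by simp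
    also have "\<dots> \<le> sqrt (2 * H T0 / t)" using sq by (rule real_sqrt_le_mono)
    also have "\<dots> = C / sqrt t" unfolding C_def by (simp add: real_sqrt_divide)
    finally show ?thesis unfolding P_def .
  qed
  then show ?thesis using T0 by blast
qed



definition bsign :: "real \<Rightarrow> real \<Rightarrow> complex" where
  "bsign nu s = (if s < 0 then exp (\<i> * pi * nu) else 1)"

lemma norm_bsign [simp]: "norm (bsign nu s) = 1"
  unfolding bsign_def by (simp add: norm_exp_eq_Re)

lemma bessel_J_real:
  assumes s: "s \<noteq> 0"
  shows "bessel_J nu (complex_of_real s) = bsign nu s * complex_of_real (BK nu \<bar>s\<bar>)"
proof -
  have ser: "(\<Sum>k. (-1) ^ k * rGamma (of_nat k + complex_of_real nu + 1) / fact k * (complex_of_real s / 2) ^ (2 * k))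
      = complex_of_real (BF nu (\<bar>s\<bar>\<^sup>2 / 4))"
  proof -
    have "(\<lambda>k. (-1) ^ k * rGamma (of_nat k + complex_of_real nu + 1) / fact k * (complex_of_real s / 2) ^ (2 * k))
        = (\<lambda>k. complex_of_real (bcoef nu k * (\<bar>s\<bar>\<^sup>2 / 4) ^ k))"
    proof
      fix k
      have "rGamma (of_nat k + complex_of_real nu + 1) = complex_of_real (rGamma (real k + nu + 1))"
        using rGamma_complex_of_real[of "real k + nu + 1"] by simp
      moreover have "(complex_of_real s / 2) ^ (2 * k) = complex_of_real ((\<bar>s\<bar>\<^sup>2 / 4) ^ k)"
        by (simp add: power_mult power2_eq_square power_divide)
      ultimately show "(-1) ^ k * rGamma (of_nat k + complex_of_real nu + 1) / fact k * (complex_of_real s / 2) ^ (2 * k)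
        = complex_of_real (bcoef nu k * (\<bar>s\<bar>\<^sup>2 / 4) ^ k)"
        unfolding bcoef_def by simp
    qed
    then show ?thesis unfolding BF_def
      by (simp add: suminf_of_real[OF bcoef_summable])
  qed
  have pw: "(complex_of_real s / 2) powr complex_of_real nu = bsign nu s * complex_of_real ((\<bar>s\<bar> / 2) powr nu)"
  proof -
    have "(complex_of_real s / 2) = complex_of_real (s / 2)" by simp
    then show ?thesis unfolding bsign_def using powr_of_real_if[of "s / 2" nu]
      by (auto simp: mult.commute)
  qed
  show ?thesis unfolding bessel_J_def ser pw BK_def by simp
qed



fun CV :: "real \<Rightarrow> real \<Rightarrow> nat \<Rightarrow> nat \<Rightarrow> (real \<Rightarrow> real) \<Rightarrow> bool" where
  "CV a b 0 m h = (continuous_on {a..b} h \<and> (0 < m \<longrightarrow> h a = 0 \<and> h b = 0))"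
| "CV a b (Suc n) m h = ((\<exists>h'. (\<forall>x\<in>{a..b}. (h has_real_derivative h' x) (at x within {a..b}))
      \<and> CV a b n (m - 1) h') \<and> (0 < m \<longrightarrow> h a = 0 \<and> h b = 0))"

lemma deriv_cont_on:
  assumes "\<forall>x\<in>S. (h has_real_derivative h' x) (at x within S)"
  shows "continuous_on S h"
  unfolding continuous_on_eq_continuous_within using assms by (auto intro: DERIV_continuous)

lemma CV_cont: "CV a b n m h \<Longrightarrow> continuous_on {a..b} h"
proof (cases n)
  case 0
  then show "CV a b n m h \<Longrightarrow> continuous_on {a..b} h" by simp
next
  case (Suc k)
  assume "CV a b n m h"
  then obtain h' where "\<forall>x\<in>{a..b}. (h has_real_derivative h' x) (at x within {a..b})"
    using Suc by auto
  then show ?thesis by (rule deriv_cont_on)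
qed

lemma CV_vanish: "CV a b n m h \<Longrightarrow> 0 < m \<Longrightarrow> h a = 0 \<and> h b = 0"
  by (cases n) auto

lemma CV_down: "CV a b (Suc n) m h \<Longrightarrow> CV a b n m h"
proof (induction n arbitrary: m h)
  case 0
  then obtain h' where "\<forall>x\<in>{a..b}. (h has_real_derivative h' x) (at x within {a..b})" by auto
  then have "continuous_on {a..b} h" by (rule deriv_cont_on)
  then show ?case using 0 by simp
next
  case (Suc n)
  then obtain h' where h': "\<forall>x\<in>{a..b}. (h has_real_derivative h' x) (at x within {a..b})"
    "CV a b (Suc n) (m - 1) h'" and v: "0 < m \<longrightarrow> h a = 0 \<and> h b = 0" by auto
  have "CV a b n (m - 1) h'" by (rule Suc.IH[OF h'(2)])
  then show ?case using h'(1) v by auto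
qed

lemma CV_mono: "m' \<le> m \<Longrightarrow> CV a b n m h \<Longrightarrow> CV a b n m' h"
proof (induction n arbitrary: m m' h)
  case 0
  then show ?case by auto
next
  case (Suc n)
  from Suc.prems obtain h' where h': "\<forall>x\<in>{a..b}. (h has_real_derivative h' x) (at x within {a..b})"
    "CV a b n (m - 1) h'" and v: "0 < m \<longrightarrow> h a = 0 \<and> h b = 0" by auto
  have "CV a b n (m' - 1) h'" using Suc.IH[OF _ h'(2)] Suc.prems(1) by simp
  then show ?case using h'(1) v Suc.prems(1) by auto
qed

lemma CV_lin: "CV a b n m h1 \<Longrightarrow> CV a b n m h2 \<Longrightarrow> CV a b n m (\<lambda>x. c1 * h1 x + c2 * h2 x)"
proof (induction n arbitrary: m h1 h2)
  case 0
  have "continuous_on {a..b} (\<lambda>x. c1 * h1 x + c2 * h2 x)"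
    using 0 by (intro continuous_on_add continuous_on_mult_left) auto
  then show ?case using 0 by simp
next
  case (Suc n)
  from Suc.prems(1) obtain h1' where h1': "\<forall>x\<in>{a..b}. (h1 has_real_derivative h1' x) (at x within {a..b})"
    "CV a b n (m - 1) h1'" and v1: "0 < m \<longrightarrow> h1 a = 0 \<and> h1 b = 0" by auto
  from Suc.prems(2) obtain h2' where h2': "\<forall>x\<in>{a..b}. (h2 has_real_derivative h2' x) (at x within {a..b})"
    "CV a b n (m - 1) h2'" and v2: "0 < m \<longrightarrow> h2 a = 0 \<and> h2 b = 0" by auto
  have "\<forall>x\<in>{a..b}. ((\<lambda>x. c1 * h1 x + c2 * h2 x) has_real_derivative c1 * h1' x + c2 * h2' x) (at x within {a..b})"
    using h1'(1) h2'(1) by (auto intro!: derivative_eq_intros)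
  moreover have "CV a b n (m - 1) (\<lambda>x. c1 * h1' x + c2 * h2' x)" by (rule Suc.IH[OF h1'(2) h2'(2)])
  ultimately show ?case using v1 v2 by auto
qed

lemma CV_diff: "CV a b n m h1 \<Longrightarrow> CV a b n m h2 \<Longrightarrow> CV a b n m (\<lambda>x. h1 x - h2 x)"
  using CV_lin[of a b n m h1 h2 1 "-1"] by simp

lemma CV_scale: "CV a b n m h \<Longrightarrow> CV a b n m (\<lambda>x. c * h x)"
  using CV_lin[of a b n m h h c 0] by simp

lemma CV_mult: "CV a b n m h \<Longrightarrow> CV a b n 0 q \<Longrightarrow> CV a b n m (\<lambda>x. h x * q x)"
proof (induction n arbitrary: m h q)
  case 0
  have "continuous_on {a..b} (\<lambda>x. h x * q x)"
    using 0 by (intro continuous_on_mult) auto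
  then show ?case using 0 by simp
next
  case (Suc n)
  from Suc.prems(1) obtain h' where h': "\<forall>x\<in>{a..b}. (h has_real_derivative h' x) (at x within {a..b})"
    "CV a b n (m - 1) h'" and v1: "0 < m \<longrightarrow> h a = 0 \<and> h b = 0" by auto
  from Suc.prems(2) obtain q' where q': "\<forall>x\<in>{a..b}. (q has_real_derivative q' x) (at x within {a..b})"
    "CV a b n 0 q'" by auto
  have "\<forall>x\<in>{a..b}. ((\<lambda>x. h x * q x) has_real_derivative 1 * (h' x * q x) + 1 * (h x * q' x)) (at x within {a..b})"
    using h'(1) q'(1) by (auto intro!: derivative_eq_intros)
  moreover have "CV a b n (m - 1) (\<lambda>x. 1 * (h' x * q x) + 1 * (h x * q' x))"
  proof (rule CV_lin)
    show "CV a b n (m - 1) (\<lambda>x. h' x * q x)"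
      by (rule Suc.IH[OF h'(2) CV_down[OF Suc.prems(2)]])
    have "CV a b n (m - 1) h" by (rule CV_mono[OF _ CV_down[OF Suc.prems(1)]]) simp
    then show "CV a b n (m - 1) (\<lambda>x. h x * q' x)"
      by (rule Suc.IH[OF _ q'(2)])
  qed
  ultimately show ?case using v1 by auto
qed

lemma CV_const: "CV a b n 0 (\<lambda>x. c)"
proof (induction n arbitrary: c)
  case 0 then show ?case by (simp add: continuous_on_const)
next
  case (Suc n)
  have d: "\<forall>x\<in>{a..b}. ((\<lambda>x. c) has_real_derivative (\<lambda>x. 0) x) (at x within {a..b})"
    by (simp add: DERIV_const)
  have e: "CV a b n (0 - 1) (\<lambda>x. 0)" using Suc.IH by simp
  show ?case unfolding CV.simps(2)
    by (rule conjI, rule exI[of _ "\<lambda>x. 0"], rule conjI[OF d e]) simp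
qed

lemma CV_inv:
  assumes "\<forall>x\<in>{a..b}. G x \<noteq> 0"
  shows "CV a b n 0 G \<Longrightarrow> CV a b n 0 (\<lambda>x. 1 / G x)"
proof (induction n)
  case 0
  have "continuous_on {a..b} (\<lambda>x. 1 / G x)"
    using 0 assms by (intro continuous_on_divide continuous_on_const) auto
  then show ?case by simp
next
  case (Suc n)
  from Suc.prems obtain G' where G': "\<forall>x\<in>{a..b}. (G has_real_derivative G' x) (at x within {a..b})"
    "CV a b n 0 G'" by auto
  have "\<forall>x\<in>{a..b}. ((\<lambda>x. 1 / G x) has_real_derivative (-1) * ((G' x * (1 / G x)) * (1 / G x))) (at x within {a..b})"
  proof
    fix x assume x: "x \<in> {a..b}"
    have "((\<lambda>x. 1 / G x) has_real_derivative (0 * G x - 1 * G' x) / (G x * G x)) (at x within {a..b})"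
      by (rule DERIV_divide[OF DERIV_const G'(1)[rule_format, OF x]]) (use assms x in auto)
    moreover have "(0 * G x - 1 * G' x) / (G x * G x) = (-1) * ((G' x * (1 / G x)) * (1 / G x))"
      using assms x by simp
    ultimately show "((\<lambda>x. 1 / G x) has_real_derivative (-1) * ((G' x * (1 / G x)) * (1 / G x))) (at x within {a..b})"
      by simp
  qed
  moreover have "CV a b n 0 (\<lambda>x. (-1) * ((G' x * (1 / G x)) * (1 / G x)))"
  proof -
    have I: "CV a b n 0 (\<lambda>x. 1 / G x)" by (rule Suc.IH[OF CV_down[OF Suc.prems]])
    show ?thesis by (rule CV_scale[OF CV_mult[OF CV_mult[OF G'(2) I] I]])
  qed
  ultimately show ?case by auto
qed

lemma CV_family:
  "smooth_derivs D {a..b} \<Longrightarrow> (\<forall>i<m. D i a = 0 \<and> D i b = 0) \<Longrightarrow> CV a b n m (D 0)"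
proof (induction n arbitrary: D m)
  case 0
  then show ?case unfolding smooth_derivs_def by (auto intro: deriv_cont_on)
next
  case (Suc n)
  have sm: "smooth_derivs (\<lambda>k. D (Suc k)) {a..b}" using Suc.prems(1) unfolding smooth_derivs_def by auto
  have "CV a b n (m - 1) ((\<lambda>k. D (Suc k)) 0)"
    by (rule Suc.IH[OF sm]) (use Suc.prems(2) in auto)
  moreover have "\<forall>x\<in>{a..b}. (D 0 has_real_derivative D 1 x) (at x within {a..b})"
    using Suc.prems(1) unfolding smooth_derivs_def by auto
  ultimately show ?case using Suc.prems(2) by auto
qed



lemma interior_deriv:
  assumes "\<forall>x\<in>{a..b}. (f has_real_derivative f' x) (at x within {a..b})" "x \<in> {a<..<b}"
  shows "(f has_vector_derivative f' x) (at x)"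
proof -
  have "x \<in> {a..b}" "a < x" "x < b" using assms(2) by auto
  then have "(f has_real_derivative f' x) (at x within {a..b})" using assms(1) by auto
  then have "(f has_real_derivative f' x) (at x)" using at_within_Icc_at[of a x b] \<open>a < x\<close> \<open>x < b\<close> by simp
  then show ?thesis by (simp add: has_real_derivative_iff_has_vector_derivative)
qed

lemma ibp_step:
  assumes ab: "a < b"
    and Gpos: "\<forall>x\<in>{a..b}. G x > 0"
    and dG: "\<forall>x\<in>{a..b}. (G has_real_derivative G' x) (at x within {a..b})"
    and G'nz: "\<forall>x\<in>{a..b}. G' x \<noteq> 0"
    and CVG: "\<And>n. CV a b n 0 G" and CVG': "\<And>n. CV a b n 0 G'"
    and h: "CV a b (Suc n) m h"
  shows "\<exists>v h1. CV a b n (m - 1) h1 \<and> (0 < m \<longrightarrow> v a = 0 \<and> v b = 0) \<and>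
    (\<forall>\<omega>>0. integral {a..b} (\<lambda>x. h x * BK mu (\<omega> * G x)) =
       (1 / \<omega>) * (v b * BK (mu + 1) (\<omega> * G b) - v a * BK (mu + 1) (\<omega> * G a)
         + integral {a..b} (\<lambda>x. h1 x * BK (mu + 1) (\<omega> * G x))))"
proof -
  have Gnz: "\<forall>x\<in>{a..b}. G x \<noteq> 0" using Gpos by auto
  define v where "v = (\<lambda>x. h x * (1 / G' x))"
  have CVv: "CV a b (Suc n) m v" unfolding v_def by (rule CV_mult[OF h CV_inv[OF G'nz CVG']])
  then obtain v' where dv: "\<forall>x\<in>{a..b}. (v has_real_derivative v' x) (at x within {a..b})"
    and CVv': "CV a b n (m - 1) v'" by auto
  define h1 where "h1 = (\<lambda>x. (mu + 1) * (h x * (1 / G x)) - v' x)"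
  have CVh: "CV a b n (m - 1) h" by (rule CV_mono[OF _ CV_down[OF h]]) simp
  have CVh1: "CV a b n (m - 1) h1"
    unfolding h1_def by (rule CV_diff[OF CV_scale[OF CV_mult[OF CVh CV_inv[OF Gnz CVG]]] CVv'])
  have van: "0 < m \<longrightarrow> v a = 0 \<and> v b = 0" using CV_vanish[OF h] unfolding v_def by auto
  have main: "integral {a..b} (\<lambda>x. h x * BK mu (\<omega> * G x)) =
       (1 / \<omega>) * (v b * BK (mu + 1) (\<omega> * G b) - v a * BK (mu + 1) (\<omega> * G a)
         + integral {a..b} (\<lambda>x. h1 x * BK (mu + 1) (\<omega> * G x)))" if om: "\<omega> > 0" for \<omega>
  proof -
    define w where "w = (\<lambda>x. BK (mu + 1) (\<omega> * G x))"
    define w' where "w' = (\<lambda>x. \<omega> * G' x * (BK mu (\<omega> * G x) - (mu + 1) / (\<omega> * G x) * BK (mu + 1) (\<omega> * G x)))"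
    have dw: "\<forall>x\<in>{a..b}. (w has_real_derivative w' x) (at x within {a..b})"
    proof
      fix x assume x: "x \<in> {a..b}"
      have pos: "\<omega> * G x > 0" using om Gpos x by auto
      have dg: "((\<lambda>x. \<omega> * G x) has_real_derivative \<omega> * G' x) (at x within {a..b})"
        using dG x by (auto intro: DERIV_cmult)
      have "((\<lambda>x. BK (mu + 1) (\<omega> * G x)) has_real_derivative
          (BK mu (\<omega> * G x) - (mu + 1) / (\<omega> * G x) * BK (mu + 1) (\<omega> * G x)) * (\<omega> * G' x)) (at x within {a..b})"
        by (rule DERIV_chain2[OF BK_deriv2[OF pos] dg])
      then show "(w has_real_derivative w' x) (at x within {a..b})"
        unfolding w_def w'_def by (simp add: mult.commute)
    qed
    have cw: "continuous_on {a..b} w" by (rule deriv_cont_on[OF dw])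
    have cv: "continuous_on {a..b} v" by (rule CV_cont[OF CVv])
    have cv': "continuous_on {a..b} v'" by (rule CV_cont[OF CVv'])
    have ch: "continuous_on {a..b} h" by (rule CV_cont[OF h])
    have cG: "continuous_on {a..b} G" by (rule CV_cont[OF CVG])
    have chG: "continuous_on {a..b} (\<lambda>x. h x * (1 / G x))" by (rule CV_cont[OF CV_mult[OF CVh CV_inv[OF Gnz CVG]]])
    have I2: "((\<lambda>x. w x * v' x) has_integral integral {a..b} (\<lambda>x. w x * v' x)) {a..b}"
      by (intro integrable_integral integrable_continuous_interval continuous_on_mult cw cv')
    have I3: "((\<lambda>x. (mu + 1) * (h x * (1 / G x)) * w x) has_integral integral {a..b} (\<lambda>x. (mu + 1) * (h x * (1 / G x)) * w x)) {a..b}"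
      by (intro integrable_integral integrable_continuous_interval continuous_on_mult continuous_on_const chG cw)
    have I1: "((\<lambda>x. w' x * v x) has_integral (w b * v b - w a * v a - integral {a..b} (\<lambda>x. w x * v' x))) {a..b}"
    proof (rule integration_by_parts_interior[OF bounded_bilinear_mult, of a b w v w' v'])
      show "a \<le> b" using ab by simp
      show "continuous_on {a..b} w" "continuous_on {a..b} v" by (rule cw, rule cv)
      show "(w has_vector_derivative w' x) (at x)" if "x \<in> {a<..<b}" for x
        by (rule interior_deriv[OF dw that])
      show "(v has_vector_derivative v' x) (at x)" if "x \<in> {a<..<b}" for x
        by (rule interior_deriv[OF dv that])
      show "((\<lambda>x. w x * v' x) has_integral (w b * v b - w a * v a - (w b * v b - w a * v a - integral {a..b} (\<lambda>x. w x * v' x)))) {a..b}"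
        using I2 by simp
    qed
    have I4: "((\<lambda>x. (1 / \<omega>) * (w' x * v x + (mu + 1) * (h x * (1 / G x)) * w x)) has_integral
        (1 / \<omega>) * ((w b * v b - w a * v a - integral {a..b} (\<lambda>x. w x * v' x)) + integral {a..b} (\<lambda>x. (mu + 1) * (h x * (1 / G x)) * w x))) {a..b}"
      by (intro has_integral_mult_right has_integral_add I1 I3)
    have eq1: "(1 / \<omega>) * (w' x * v x + (mu + 1) * (h x * (1 / G x)) * w x) = h x * BK mu (\<omega> * G x)"
      if x: "x \<in> {a..b}" for x
    proof -
      have "G' x \<noteq> 0" "G x > 0" using x G'nz Gpos by auto
      then show ?thesis using om unfolding w_def w'_def v_def by (simp add: field_simps)
    qed
    have I5: "((\<lambda>x. h x * BK mu (\<omega> * G x)) has_integral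
        (1 / \<omega>) * ((w b * v b - w a * v a - integral {a..b} (\<lambda>x. w x * v' x)) + integral {a..b} (\<lambda>x. (mu + 1) * (h x * (1 / G x)) * w x))) {a..b}"
      by (rule has_integral_eq[OF eq1 I4])
    have I6: "integral {a..b} (\<lambda>x. h1 x * w x) = integral {a..b} (\<lambda>x. (mu + 1) * (h x * (1 / G x)) * w x) - integral {a..b} (\<lambda>x. w x * v' x)"
    proof -
      have "((\<lambda>x. (mu + 1) * (h x * (1 / G x)) * w x - w x * v' x) has_integral
          integral {a..b} (\<lambda>x. (mu + 1) * (h x * (1 / G x)) * w x) - integral {a..b} (\<lambda>x. w x * v' x)) {a..b}"
        by (rule has_integral_diff[OF I3 I2])
      moreover have "(\<lambda>x. (mu + 1) * (h x * (1 / G x)) * w x - w x * v' x) = (\<lambda>x. h1 x * w x)"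
        unfolding h1_def by (auto simp: algebra_simps)
      ultimately show ?thesis by (simp add: integral_unique)
    qed
    have "integral {a..b} (\<lambda>x. h x * BK mu (\<omega> * G x)) = (1 / \<omega>) * ((w b * v b - w a * v a - integral {a..b} (\<lambda>x. w x * v' x)) + integral {a..b} (\<lambda>x. (mu + 1) * (h x * (1 / G x)) * w x))"
      by (rule integral_unique[OF I5])
    also have "\<dots> = (1 / \<omega>) * (v b * w b - v a * w a + (integral {a..b} (\<lambda>x. (mu + 1) * (h x * (1 / G x)) * w x) - integral {a..b} (\<lambda>x. w x * v' x)))"
      by (simp add: mult.commute)
    also have "\<dots> = (1 / \<omega>) * (v b * w b - v a * w a + integral {a..b} (\<lambda>x. h1 x * w x))"
      by (simp only: I6)
    finally show ?thesis unfolding w_def .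
  qed
  show ?thesis using CVh1 van main by blast
qed



lemma BK_cont: "continuous_on {0<..} (BK mu)"
proof (rule continuous_at_imp_continuous_on, rule ballI)
  fix t :: real assume "t \<in> {0<..}"
  then have "t > 0" by simp
  then show "isCont (BK mu) t" using BK_deriv DERIV_isCont by blast
qed

lemma BK_comp_cont:
  assumes "\<forall>x\<in>S. G x > 0" "continuous_on S G" "\<omega> > 0"
  shows "continuous_on S (\<lambda>x. BK mu (\<omega> * G x))"
  by (rule continuous_on_compose2[OF BK_cont]) (use assms in \<open>auto intro: continuous_on_mult_left\<close>)

lemma BK_unif:
  assumes g0: "g0 > 0" and G: "\<forall>x\<in>S. G x \<ge> g0"
  shows "\<exists>C W. W > 0 \<and> (\<forall>\<omega>\<ge>W. \<forall>x\<in>S. \<bar>BK mu (\<omega> * G x)\<bar> \<le> C * \<omega> powr (-1/2))"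
proof -
  obtain C0 T where T: "T > 0" and CT: "\<forall>t\<ge>T. \<bar>BK mu t\<bar> \<le> C0 / sqrt t"
    using BK_bound by blast
  have C0: "C0 \<ge> 0"
  proof -
    have "0 \<le> C0 / sqrt T" using CT[rule_format, of T] by (meson abs_ge_zero order.trans order_refl)
    then show ?thesis using T by (simp add: zero_le_divide_iff)
  qed
  define W where "W = T / g0"
  have "\<bar>BK mu (\<omega> * G x)\<bar> \<le> (C0 / sqrt g0) * \<omega> powr (-1/2)" if om: "\<omega> \<ge> W" and x: "x \<in> S" for \<omega> x
  proof -
    have om0: "\<omega> > 0" using om T g0 unfolding W_def by (smt (verit) divide_pos_pos)
    have Gx: "G x \<ge> g0" using G x by auto
    have "\<omega> * G x \<ge> W * g0" by (intro mult_mono om Gx) (use om0 g0 T in \<open>auto simp: W_def\<close>)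
    then have t: "\<omega> * G x \<ge> T" unfolding W_def using g0 by simp
    have "\<bar>BK mu (\<omega> * G x)\<bar> \<le> C0 / sqrt (\<omega> * G x)" using CT t by auto
    also have "\<dots> \<le> C0 / sqrt (\<omega> * g0)"
      by (intro divide_left_mono C0 real_sqrt_le_mono mult_left_mono Gx) (use om0 g0 Gx in \<open>auto intro!: mult_pos_pos\<close>)
    also have "\<dots> = (C0 / sqrt g0) * \<omega> powr (-1/2)"
      using om0 g0 by (simp add: powr_minus_divide powr_half_sqrt real_sqrt_mult)
    finally show ?thesis .
  qed
  moreover have "W > 0" unfolding W_def using T g0 by simp
  ultimately show ?thesis by blast
qed

lemma powr_shift1: "(\<omega>::real) > 0 \<Longrightarrow> (1 / \<omega>) * \<omega> powr e = \<omega> powr (e - 1)"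
  by (simp add: powr_diff)

lemma decay:
  assumes ab: "a < b"
    and Gpos: "\<forall>x\<in>{a..b}. G x > 0"
    and dG: "\<forall>x\<in>{a..b}. (G has_real_derivative G' x) (at x within {a..b})"
    and G'nz: "\<forall>x\<in>{a..b}. G' x \<noteq> 0"
    and CVG: "\<And>n. CV a b n 0 G" and CVG': "\<And>n. CV a b n 0 G'"
  shows "\<forall>mu h. CV a b (Suc m) m h \<longrightarrow> (\<exists>C W. W > 0 \<and>
     (\<forall>\<omega>\<ge>W. \<bar>integral {a..b} (\<lambda>x. h x * BK mu (\<omega> * G x))\<bar> \<le> C * \<omega> powr (- real m - 3/2)))"
proof (induction m)
  case 0
  have cG: "continuous_on {a..b} G" by (rule CV_cont[OF CVG])
  obtain x0 where x0: "x0 \<in> {a..b}" "\<forall>y\<in>{a..b}. G x0 \<le> G y"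
    using continuous_attains_inf[OF compact_Icc _ cG] ab by auto
  define g0 where "g0 = G x0"
  have g0: "g0 > 0" "\<forall>y\<in>{a..b}. G y \<ge> g0" using x0 Gpos unfolding g0_def by auto
  show ?case
  proof (intro allI impI)
    fix mu h assume h: "CV a b (Suc 0) 0 h"
    obtain v h1 where h1: "CV a b 0 (0 - 1) h1" and
      eq: "\<forall>\<omega>>0. integral {a..b} (\<lambda>x. h x * BK mu (\<omega> * G x)) =
       (1 / \<omega>) * (v b * BK (mu + 1) (\<omega> * G b) - v a * BK (mu + 1) (\<omega> * G a)
         + integral {a..b} (\<lambda>x. h1 x * BK (mu + 1) (\<omega> * G x)))"
      using ibp_step[OF ab Gpos dG G'nz CVG CVG' h, of mu] by blast
    have ch1: "continuous_on {a..b} h1" using h1 by simp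
    obtain xm where xm: "xm \<in> {a..b}" "\<forall>y\<in>{a..b}. \<bar>h1 y\<bar> \<le> \<bar>h1 xm\<bar>"
      using continuous_attains_sup[OF compact_Icc _ continuous_on_rabs[OF ch1]] ab by auto
    define M where "M = \<bar>h1 xm\<bar>"
    have M: "M \<ge> 0" "\<forall>y\<in>{a..b}. \<bar>h1 y\<bar> \<le> M" using xm unfolding M_def by auto
    obtain C W where W: "W > 0" and CW: "\<forall>\<omega>\<ge>W. \<forall>x\<in>{a..b}. \<bar>BK (mu + 1) (\<omega> * G x)\<bar> \<le> C * \<omega> powr (-1/2)"
      using BK_unif[OF g0] by blast
    define K where "K = (\<bar>v a\<bar> + \<bar>v b\<bar> + M * (b - a)) * C"
    have "\<bar>integral {a..b} (\<lambda>x. h x * BK mu (\<omega> * G x))\<bar> \<le> K * \<omega> powr (- real 0 - 3/2)"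
      if om: "\<omega> \<ge> W" for \<omega>
    proof -
      have om0: "\<omega> > 0" using om W by simp
      define P where "P = C * \<omega> powr (-1/2)"
      have bP: "\<forall>x\<in>{a..b}. \<bar>BK (mu + 1) (\<omega> * G x)\<bar> \<le> P" using CW om unfolding P_def by auto
      have P0: "P \<ge> 0" using bP ab by (meson abs_ge_zero atLeastAtMost_iff less_eq_real_def order.trans)
      have aS: "a \<in> {a..b}" "b \<in> {a..b}" using ab by auto
      have cint: "continuous_on {a..b} (\<lambda>x. h1 x * BK (mu + 1) (\<omega> * G x))"
        by (intro continuous_on_mult ch1 BK_comp_cont Gpos cG om0)
      have bi: "norm (integral {a..b} (\<lambda>x. h1 x * BK (mu + 1) (\<omega> * G x))) \<le> (M * P) * (b - a)"
      proof (rule integral_bound)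
        show "a \<le> b" using ab by simp
        show "continuous_on {a..b} (\<lambda>x. h1 x * BK (mu + 1) (\<omega> * G x))" by (rule cint)
        fix t assume t: "t \<in> {a..b}"
        show "norm (h1 t * BK (mu + 1) (\<omega> * G t)) \<le> M * P"
          unfolding real_norm_def abs_mult using M t bP by (intro mult_mono) auto
      qed
      have "\<bar>v b * BK (mu + 1) (\<omega> * G b) - v a * BK (mu + 1) (\<omega> * G a)
         + integral {a..b} (\<lambda>x. h1 x * BK (mu + 1) (\<omega> * G x))\<bar>
        \<le> \<bar>v b\<bar> * \<bar>BK (mu + 1) (\<omega> * G b)\<bar> + \<bar>v a\<bar> * \<bar>BK (mu + 1) (\<omega> * G a)\<bar>
         + norm (integral {a..b} (\<lambda>x. h1 x * BK (mu + 1) (\<omega> * G x)))"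
        by (simp add: abs_mult[symmetric] abs_triangle_ineq4 order_trans[OF abs_triangle_ineq] add_mono)
      also have "\<dots> \<le> \<bar>v b\<bar> * P + \<bar>v a\<bar> * P + (M * P) * (b - a)"
        by (intro add_mono mult_left_mono bi) (use bP aS in auto)
      also have "\<dots> = (\<bar>v a\<bar> + \<bar>v b\<bar> + M * (b - a)) * P" by (simp add: algebra_simps)
      finally have B: "\<bar>v b * BK (mu + 1) (\<omega> * G b) - v a * BK (mu + 1) (\<omega> * G a)
         + integral {a..b} (\<lambda>x. h1 x * BK (mu + 1) (\<omega> * G x))\<bar> \<le> (\<bar>v a\<bar> + \<bar>v b\<bar> + M * (b - a)) * P" .
      have "\<bar>integral {a..b} (\<lambda>x. h x * BK mu (\<omega> * G x))\<bar> = (1 / \<omega>) * \<bar>v b * BK (mu + 1) (\<omega> * G b) - v a * BK (mu + 1) (\<omega> * G a)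
         + integral {a..b} (\<lambda>x. h1 x * BK (mu + 1) (\<omega> * G x))\<bar>"
        using eq om0 by (simp add: abs_mult)
      also have "\<dots> \<le> (1 / \<omega>) * ((\<bar>v a\<bar> + \<bar>v b\<bar> + M * (b - a)) * P)"
        by (intro mult_left_mono B) (use om0 in auto)
      also have "\<dots> = K * ((1 / \<omega>) * \<omega> powr (-1/2))" unfolding K_def P_def by (simp add: algebra_simps)
      also have "\<dots> = K * \<omega> powr (- real 0 - 3/2)" using powr_shift1[OF om0, of "-1/2"] by simp
      finally show ?thesis .
    qed
    then show "\<exists>C W. W > 0 \<and> (\<forall>\<omega>\<ge>W. \<bar>integral {a..b} (\<lambda>x. h x * BK mu (\<omega> * G x))\<bar> \<le> C * \<omega> powr (- real 0 - 3/2))"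
      using W by blast
  qed
next
  case (Suc m)
  show ?case
  proof (intro allI impI)
    fix mu h assume h: "CV a b (Suc (Suc m)) (Suc m) h"
    obtain v h1 where h1: "CV a b (Suc m) (Suc m - 1) h1" and van: "0 < Suc m \<longrightarrow> v a = 0 \<and> v b = 0" and
      eq: "\<forall>\<omega>>0. integral {a..b} (\<lambda>x. h x * BK mu (\<omega> * G x)) =
       (1 / \<omega>) * (v b * BK (mu + 1) (\<omega> * G b) - v a * BK (mu + 1) (\<omega> * G a)
         + integral {a..b} (\<lambda>x. h1 x * BK (mu + 1) (\<omega> * G x)))"
      using ibp_step[OF ab Gpos dG G'nz CVG CVG' h, of mu] by blast
    have h1': "CV a b (Suc m) m h1" using h1 by simp
    obtain C W where W: "W > 0" and CW: "\<forall>\<omega>\<ge>W. \<bar>integral {a..b} (\<lambda>x. h1 x * BK (mu + 1) (\<omega> * G x))\<bar> \<le> C * \<omega> powr (- real m - 3/2)"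
      using Suc.IH h1' by blast
    have "\<bar>integral {a..b} (\<lambda>x. h x * BK mu (\<omega> * G x))\<bar> \<le> C * \<omega> powr (- real (Suc m) - 3/2)"
      if om: "\<omega> \<ge> W" for \<omega>
    proof -
      have om0: "\<omega> > 0" using om W by simp
      have "\<bar>integral {a..b} (\<lambda>x. h x * BK mu (\<omega> * G x))\<bar> = (1 / \<omega>) * \<bar>integral {a..b} (\<lambda>x. h1 x * BK (mu + 1) (\<omega> * G x))\<bar>"
        using eq van om0 by (simp add: abs_mult)
      also have "\<dots> \<le> (1 / \<omega>) * (C * \<omega> powr (- real m - 3/2))"
        by (intro mult_left_mono) (use CW om om0 in auto)
      also have "\<dots> = C * ((1 / \<omega>) * \<omega> powr (- real m - 3/2))" by simp
      also have "\<dots> = C * \<omega> powr (- real (Suc m) - 3/2)"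
        using powr_shift1[OF om0, of "- real m - 3/2"] by (simp add: algebra_simps)
      finally show ?thesis .
    qed
    then show "\<exists>C W. W > 0 \<and> (\<forall>\<omega>\<ge>W. \<bar>integral {a..b} (\<lambda>x. h x * BK mu (\<omega> * G x))\<bar> \<le> C * \<omega> powr (- real (Suc m) - 3/2))"
      using W by blast
  qed
qed



lemma pos_on_interval:
  fixes G :: "real \<Rightarrow> real"
  assumes "continuous_on {a..b} G" "\<forall>x\<in>{a..b}. G x \<noteq> 0" "G a > 0"
  shows "\<forall>x\<in>{a..b}. G x > 0"
proof
  fix x assume x: "x \<in> {a..b}"
  show "G x > 0"
  proof (rule ccontr)
    assume "\<not> G x > 0"
    then have "G x \<le> 0" by simp
    moreover have "continuous_on {a..x} G" using x by (intro continuous_on_subset[OF assms(1)]) auto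
    ultimately obtain y where "a \<le> y" "y \<le> x" "G y = 0"
      using IVT2'[of G x 0 a] assms(3) x by auto
    then show False using assms(2) x by auto
  qed
qed

lemma integral_cof:
  assumes "F integrable_on S"
  shows "integral S (\<lambda>x. \<sigma> * complex_of_real (F x)) = \<sigma> * complex_of_real (integral S F)"
proof -
  have bl: "bounded_linear (\<lambda>y. \<sigma> * complex_of_real y)"
    by (intro bounded_linear_compose[OF bounded_linear_mult_right bounded_linear_of_real])
  show ?thesis using integral_linear[OF assms bl] by (simp add: o_def)
qed

theorem theorem2p5:
  fixes nu a b :: real
    and Df Dg Dp :: "nat \<Rightarrow> real \<Rightarrow> real"
    and d :: nat and x :: "nat \<Rightarrow> real" and mult :: "nat \<Rightarrow> nat"
    and c :: "nat \<Rightarrow> real" and m :: nat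
  defines "f \<equiv> Df 0"
    and "g \<equiv> Dg 0"
    and "p \<equiv> (\<lambda>t. \<Sum>k<(\<Sum>i\<le>d. mult i). c k * (Dg 1 t * Dg 0 t ^ k))"
  assumes "a < b"
    and f_smooth: "smooth_derivs Df {a..b}"
    and g_smooth: "smooth_derivs Dg {a..b}"
    and g_nz: "\<forall>t\<in>{a..b}. g t \<noteq> 0"
    and g'_nz: "\<forall>t\<in>{a..b}. Dg 1 t \<noteq> 0"
    and x0: "x 0 = a" and xd: "x d = b"
    and x_mono: "\<forall>k<d. x k < x (Suc k)"
    and mult_pos: "\<forall>k\<le>d. mult k \<ge> 1"
    and p_derivs: "\<forall>t\<in>{a..b}. Dp 0 t = p t" "smooth_derivs Dp {a..b}"
    and interp: "\<forall>k\<le>d. \<forall>j<mult k. Dp j (x k) = Df j (x k)"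
    and m_pos: "m \<ge> 1"
    and m_ends: "mult 0 \<ge> m" "mult d \<ge> m"
  shows "(\<lambda>\<omega>. norm (bessel_H nu a b g f \<omega> - bessel_H nu a b g p \<omega>))
           \<in> O[at_top](\<lambda>\<omega>. \<omega> powr (- real m - 3/2))"
proof -
  have ab: "a < b" by fact
  have smg0: "\<forall>x\<in>{a..b}. (Dg 0 has_real_derivative Dg 1 x) (at x within {a..b})"
    using g_smooth unfolding smooth_derivs_def by auto
  define \<epsilon> where "\<epsilon> = (if g a > 0 then 1 else -1 :: real)"
  define DG where "DG = (\<lambda>k x. \<epsilon> * Dg k x)"
  define G where "G = DG 0"
  define G' where "G' = DG 1"
  have smG: "smooth_derivs DG {a..b}"
    using g_smooth unfolding smooth_derivs_def DG_def by (auto intro: DERIV_cmult)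
  have smG': "smooth_derivs (\<lambda>k. DG (Suc k)) {a..b}"
    using smG unfolding smooth_derivs_def by auto
  have CVG: "CV a b n 0 G" for n unfolding G_def by (rule CV_family[OF smG]) simp
  have CVG': "CV a b n 0 G'" for n
    using CV_family[OF smG', of 0 n] unfolding G'_def by simp
  have dG: "\<forall>x\<in>{a..b}. (G has_real_derivative G' x) (at x within {a..b})"
    using smG unfolding smooth_derivs_def G_def G'_def by auto
  have eps: "\<epsilon> = 1 \<or> \<epsilon> = -1" unfolding \<epsilon>_def by auto
  have G'nz: "\<forall>x\<in>{a..b}. G' x \<noteq> 0" using g'_nz eps unfolding G'_def DG_def by auto
  have Gnz: "\<forall>x\<in>{a..b}. G x \<noteq> 0" using g_nz eps unfolding G_def DG_def g_def by auto
  have ga: "g a \<noteq> 0" using g_nz ab by auto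
  have Ga: "G a > 0" using ga unfolding G_def DG_def \<epsilon>_def g_def by auto
  have Gpos: "\<forall>x\<in>{a..b}. G x > 0" by (rule pos_on_interval[OF CV_cont[OF CVG] Gnz Ga])
  have cG: "continuous_on {a..b} G" by (rule CV_cont[OF CVG])
  define E where "E = (\<lambda>k x. Df k x - Dp k x)"
  have smE: "smooth_derivs E {a..b}"
    using f_smooth p_derivs(2) unfolding smooth_derivs_def E_def by (auto intro: DERIV_diff)
  have van: "\<forall>i<m. E i a = 0 \<and> E i b = 0"
  proof (intro allI impI)
    fix i assume i: "i < m"
    have "Dp i (x 0) = Df i (x 0)" using interp i m_ends(1) by auto
    moreover have "Dp i (x d) = Df i (x d)" using interp i m_ends(2) by auto
    ultimately show "E i a = 0 \<and> E i b = 0" unfolding E_def x0 xd by simp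
  qed
  have CVh: "CV a b (Suc m) m (E 0)" by (rule CV_family[OF smE van])
  obtain C W where W: "W > 0" and CW: "\<forall>\<omega>\<ge>W. \<bar>integral {a..b} (\<lambda>x. E 0 x * BK nu (\<omega> * G x))\<bar> \<le> C * \<omega> powr (- real m - 3/2)"
    using decay[OF ab Gpos dG G'nz CVG CVG', of m] CVh by blast
  define \<sigma> where "\<sigma> = bsign nu \<epsilon>"
  have key: "norm (bessel_H nu a b g f \<omega> - bessel_H nu a b g p \<omega>) = \<bar>integral {a..b} (\<lambda>x. E 0 x * BK nu (\<omega> * G x))\<bar>"
    if om: "\<omega> > 0" for \<omega>
  proof -
    have J: "bessel_J nu (complex_of_real (\<omega> * g x)) = \<sigma> * complex_of_real (BK nu (\<omega> * G x))"
      if x: "x \<in> {a..b}" for x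
    proof -
      have Gx: "G x > 0" using Gpos x by auto
      have gx: "g x \<noteq> 0" using g_nz x by auto
      have nz: "\<omega> * g x \<noteq> 0" using om gx by simp
      have abs_eq: "\<bar>\<omega> * g x\<bar> = \<omega> * G x"
        using Gx om eps unfolding G_def DG_def g_def by (auto simp: abs_mult)
      have sgn: "(\<omega> * g x < 0) = (\<epsilon> < 0)"
        using Gx om eps unfolding G_def DG_def g_def
        by (auto simp: mult_less_0_iff zero_less_mult_iff)
      have "bsign nu (\<omega> * g x) = \<sigma>" unfolding \<sigma>_def bsign_def sgn ..
      then show ?thesis using bessel_J_real[OF nz, of nu] abs_eq by simp
    qed
    have cK: "continuous_on {a..b} (\<lambda>x. BK nu (\<omega> * G x))" by (rule BK_comp_cont[OF Gpos cG om])
    have cf: "continuous_on {a..b} (Df 0)"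
      by (rule deriv_cont_on) (use f_smooth in \<open>auto simp: smooth_derivs_def\<close>)
    have cp: "continuous_on {a..b} (Dp 0)"
      by (rule deriv_cont_on) (use p_derivs(2) in \<open>auto simp: smooth_derivs_def\<close>)
    have intf: "(\<lambda>x. Df 0 x * BK nu (\<omega> * G x)) integrable_on {a..b}"
      by (intro integrable_continuous_interval continuous_on_mult cf cK)
    have intp: "(\<lambda>x. Dp 0 x * BK nu (\<omega> * G x)) integrable_on {a..b}"
      by (intro integrable_continuous_interval continuous_on_mult cp cK)
    have Hf: "bessel_H nu a b g f \<omega> = \<sigma> * complex_of_real (integral {a..b} (\<lambda>x. Df 0 x * BK nu (\<omega> * G x)))"
    proof -
      have "bessel_H nu a b g f \<omega> = integral {a..b} (\<lambda>x. \<sigma> * complex_of_real (Df 0 x * BK nu (\<omega> * G x)))"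
        unfolding bessel_H_def
      proof (rule integral_cong)
        fix x assume x: "x \<in> {a..b}"
        show "complex_of_real (f x) * bessel_J nu (complex_of_real (\<omega> * g x)) = \<sigma> * complex_of_real (Df 0 x * BK nu (\<omega> * G x))"
          using J[OF x] x  by (simp add: f_def)
      qed
      also have "\<dots> = \<sigma> * complex_of_real (integral {a..b} (\<lambda>x. Df 0 x * BK nu (\<omega> * G x)))"
        by (rule integral_cof[OF intf])
      finally show ?thesis .
    qed
    have Hp: "bessel_H nu a b g p \<omega> = \<sigma> * complex_of_real (integral {a..b} (\<lambda>x. Dp 0 x * BK nu (\<omega> * G x)))"
    proof -
      have "bessel_H nu a b g p \<omega> = integral {a..b} (\<lambda>x. \<sigma> * complex_of_real (Dp 0 x * BK nu (\<omega> * G x)))"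
        unfolding bessel_H_def
      proof (rule integral_cong)
        fix x assume x: "x \<in> {a..b}"
        show "complex_of_real (p x) * bessel_J nu (complex_of_real (\<omega> * g x)) = \<sigma> * complex_of_real (Dp 0 x * BK nu (\<omega> * G x))"
          using J[OF x] x p_derivs(1) by (simp add: algebra_simps)
      qed
      also have "\<dots> = \<sigma> * complex_of_real (integral {a..b} (\<lambda>x. Dp 0 x * BK nu (\<omega> * G x)))"
        by (rule integral_cof[OF intp])
      finally show ?thesis .
    qed
    have D: "integral {a..b} (\<lambda>x. Df 0 x * BK nu (\<omega> * G x)) - integral {a..b} (\<lambda>x. Dp 0 x * BK nu (\<omega> * G x))
        = integral {a..b} (\<lambda>x. E 0 x * BK nu (\<omega> * G x))"
      unfolding E_def using integral_diff[OF intf intp] by (simp add: algebra_simps)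
    have "bessel_H nu a b g f \<omega> - bessel_H nu a b g p \<omega>
        = \<sigma> * complex_of_real (integral {a..b} (\<lambda>x. E 0 x * BK nu (\<omega> * G x)))"
      unfolding Hf Hp D[symmetric] by (simp add: algebra_simps)
    then show ?thesis unfolding \<sigma>_def by (simp add: norm_mult)
  qed
  show ?thesis
  proof (rule bigoI[where c = C])
    show "eventually (\<lambda>\<omega>. norm (norm (bessel_H nu a b g f \<omega> - bessel_H nu a b g p \<omega>))
        \<le> C * norm (\<omega> powr (- real m - 3/2))) at_top"
      unfolding eventually_at_top_linorder
    proof (intro exI allI impI)
      fix \<omega> :: real assume om: "\<omega> \<ge> W"
      then have om0: "\<omega> > 0" using W by simp
      show "norm (norm (bessel_H nu a b g f \<omega> - bessel_H nu a b g p \<omega>)) \<le> C * norm (\<omega> powr (- real m - 3/2))"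
        using key[OF om0] CW om by simp
    qed
  qed
qed

end
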